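(* Let $\mathcal{K}$ be a set of compact, orthogonally convex subsets of $\mathbb{R}^n$ that contains every singleton $\{x\}$ and satisfies $X+I\in\mathcal{K}$ whenever $X\in\mathcal{K}$ and $I$ is a compact interval. Then every monotone translation-invariant valuation on $\mathcal{K}$ is continuous with respect to the Hausdorff metric.
   Context: A subset $X\subseteq\mathbb{R}^n$ is orthogonally convex if $X\cap L$ is convex for every straight line $L$ parallel to a coordinate axis. An interval in $\mathbb{R}^n$ is a product of intervals in $\mathbb{R}$; $+$ is Minkowski sum. A valuation on $\mathcal{K}$ is a function $\phi\colon\mathcal{K}\to\mathbb{R}$ with $\phi(\emptyset)=0$ and $\phi(X\cup Y)=\phi(X)+\phi(Y)-\phi(X\cap Y)$ whenever $X,Y,X\cup Y,X\cap Y\in\mathcal{K}$. It is increasing if $X\subseteq Y$ implies $\phi(X)\le\phi(Y)$, monotone if $\phi$ or $-\phi$ is increasing, and translation-invariant if $\phi(X+a)=\phi(X)$ for all $X\in\mathcal{K}$, $a\in\mathbb{R}^n$. The Hausdorff distance between compact $X,Y$ is $\inf\{\delta>0: X\subseteq Y+\delta B_n,\ Y\subseteq X+\delta B_n\}$ with $B_n$ the closed unit ball of the $\ell_1$ norm (any norm gives the same notion of continuity). *)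

theory Defs
  imports "HOL-Analysis.Analysis"
begin

definition orth_convex :: "'a::euclidean_space set \<Rightarrow> bool" where
  "orth_convex X \<longleftrightarrow> (\<forall>b\<in>Basis. \<forall>p. convex (X \<inter> {p + t *\<^sub>R b | t. True}))"

definition msum :: "'a::euclidean_space set \<Rightarrow> 'a set \<Rightarrow> 'a set" where
  "msum X Y = {x + y | x y. x \<in> X \<and> y \<in> Y}"

definition valuation_on :: "'a set set \<Rightarrow> ('a set \<Rightarrow> real) \<Rightarrow> bool" where
  "valuation_on K \<phi> \<longleftrightarrow> \<phi> {} = 0 \<and>
     (\<forall>X Y. X \<in> K \<longrightarrow> Y \<in> K \<longrightarrow> X \<union> Y \<in> K \<longrightarrow> X \<inter> Y \<in> K \<longrightarrow>
        \<phi> (X \<union> Y) = \<phi> X + \<phi> Y - \<phi> (X \<inter> Y))"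

definition increasing_on :: "'a set set \<Rightarrow> ('a set \<Rightarrow> real) \<Rightarrow> bool" where
  "increasing_on K \<phi> \<longleftrightarrow> (\<forall>X\<in>K. \<forall>Y\<in>K. X \<subseteq> Y \<longrightarrow> \<phi> X \<le> \<phi> Y)"

definition monotone_val_on :: "'a set set \<Rightarrow> ('a set \<Rightarrow> real) \<Rightarrow> bool" where
  "monotone_val_on K \<phi> \<longleftrightarrow> increasing_on K \<phi> \<or> increasing_on K (\<lambda>X. - \<phi> X)"

definition translation_invariant_on :: "'a::euclidean_space set set \<Rightarrow> ('a set \<Rightarrow> real) \<Rightarrow> bool" where
  "translation_invariant_on K \<phi> \<longleftrightarrow> (\<forall>X\<in>K. \<forall>a. \<phi> ((\<lambda>x. x + a) ` X) = \<phi> X)"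

definition l1_cball :: "real \<Rightarrow> 'a::euclidean_space set" where
  "l1_cball r = {x. (\<Sum>b\<in>Basis. \<bar>x \<bullet> b\<bar>) \<le> r}"

definition hausdorff_dist :: "'a::euclidean_space set \<Rightarrow> 'a set \<Rightarrow> real" where
  "hausdorff_dist X Y = Inf {\<delta>. \<delta> > 0 \<and> X \<subseteq> msum Y (l1_cball \<delta>) \<and> Y \<subseteq> msum X (l1_cball \<delta>)}"

definition hausdorff_continuous_on :: "'a::euclidean_space set set \<Rightarrow> ('a set \<Rightarrow> real) \<Rightarrow> bool" where
  "hausdorff_continuous_on K \<phi> \<longleftrightarrow>
     (\<forall>X\<in>K. X \<noteq> {} \<longrightarrow> (\<forall>e>0. \<exists>d>0. \<forall>Y\<in>K. Y \<noteq> {} \<longrightarrow> hausdorff_dist X Y < d \<longrightarrow> \<bar>\<phi> Y - \<phi> X\<bar> < e))"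

end

theory Submission
  imports Defs
begin

lemma seg_cbox:
  fixes b :: "'a::euclidean_space"
  assumes b: "b \<in> Basis"
  shows "cbox (\<alpha> *\<^sub>R b) (\<beta> *\<^sub>R b) = {u *\<^sub>R b | u. \<alpha> \<le> u \<and> u \<le> \<beta>}"
proof (intro set_eqI iffI)
  fix x assume x: "x \<in> cbox (\<alpha> *\<^sub>R b) (\<beta> *\<^sub>R b)"
  have c: "\<And>i. i \<in> Basis \<Longrightarrow> \<alpha> * (b \<bullet> i) \<le> x \<bullet> i \<and> x \<bullet> i \<le> \<beta> * (b \<bullet> i)"
    using x by (simp add: mem_box)
  have z: "\<And>i. i \<in> Basis \<Longrightarrow> i \<noteq> b \<Longrightarrow> x \<bullet> i = 0"
    using c b by (metis inner_not_same_Basis mult_zero_right order_antisym_conv)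
  have "x = (x \<bullet> b) *\<^sub>R b"
  proof (rule euclidean_eqI)
    fix i :: 'a assume i: "i \<in> Basis"
    show "x \<bullet> i = ((x \<bullet> b) *\<^sub>R b) \<bullet> i"
      using z[OF i] b i by (cases "i = b") (auto simp: inner_Basis)
  qed
  moreover have "\<alpha> \<le> x \<bullet> b" "x \<bullet> b \<le> \<beta>" using c[OF b] b by auto
  ultimately show "x \<in> {u *\<^sub>R b | u. \<alpha> \<le> u \<and> u \<le> \<beta>}" by blast
next
  fix x assume "x \<in> {u *\<^sub>R b | u. \<alpha> \<le> u \<and> u \<le> \<beta>}"
  then obtain u where u: "x = u *\<^sub>R b" "\<alpha> \<le> u" "u \<le> \<beta>" by blast
  show "x \<in> cbox (\<alpha> *\<^sub>R b) (\<beta> *\<^sub>R b)"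
    using u b by (auto simp: mem_box inner_Basis)
qed

lemma msum_seg:
  fixes b :: "'a::euclidean_space"
  assumes b: "b \<in> Basis"
  shows "x \<in> msum Z (cbox (\<alpha> *\<^sub>R b) (\<beta> *\<^sub>R b)) \<longleftrightarrow> (\<exists>z\<in>Z. \<exists>u. \<alpha> \<le> u \<and> u \<le> \<beta> \<and> x = z + u *\<^sub>R b)"
  unfolding msum_def seg_cbox[OF b] by blast

lemma msum_image_translate: "msum Z ((\<lambda>x. c + x) ` A) = (\<lambda>x. x + c) ` msum Z A"
  unfolding msum_def by (auto simp: image_iff algebra_simps) (metis add.assoc)+

lemma msum_cbox_translate: "msum Z (cbox (c + a) (c + b)) = (\<lambda>x. x + c) ` msum Z (cbox a b)"
  by (simp add: cbox_translation msum_image_translate)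

lemma msum_sing: "msum Z {c} = (\<lambda>x. x + c) ` Z"
  unfolding msum_def by auto

lemma msum_assoc: "msum (msum Z A) B = msum Z (msum A B)"
  unfolding msum_def by (auto simp: add.assoc) (metis add.assoc)+

lemma msum_mono: "A \<subseteq> B \<Longrightarrow> msum Z A \<subseteq> msum Z B"
  unfolding msum_def by auto

lemma msum_mono1: "Z \<subseteq> W \<Longrightarrow> msum Z A \<subseteq> msum W A"
  unfolding msum_def by auto

lemma ones_inner:
  fixes F :: "'a::euclidean_space set"
  assumes "F \<subseteq> Basis" "i \<in> Basis"
  shows "(\<Sum>b\<in>F. b) \<bullet> i = (if i \<in> F then 1 else 0)"
proof -
  have "(\<Sum>b\<in>F. b) \<bullet> i = (\<Sum>b\<in>F. if b = i then 1 else 0)"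
    using assms by (auto simp: inner_sum_left inner_Basis intro!: sum.cong)
  also have "\<dots> = (if i \<in> F then 1 else 0)"
    using assms finite_subset[OF assms(1)] by (simp add: sum.delta')
  finally show ?thesis .
qed

lemma msum_seg0:
  fixes b :: "'a::euclidean_space"
  assumes b: "b \<in> Basis"
  shows "x \<in> msum Z (cbox 0 (\<beta> *\<^sub>R b)) \<longleftrightarrow> (\<exists>z\<in>Z. \<exists>u. 0 \<le> u \<and> u \<le> \<beta> \<and> x = z + u *\<^sub>R b)"
  using msum_seg[OF b, of x Z 0 \<beta>] by simp

lemma between_in:
  fixes b :: "'a::euclidean_space"
  assumes b: "b \<in> Basis" and oc: "orth_convex Z" and z1: "z1 \<in> Z" and z2: "z1 + c *\<^sub>R b \<in> Z"
    and d: "c \<le> d" "d \<le> 0"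
  shows "z1 + d *\<^sub>R b \<in> Z"
proof (cases "c = 0")
  case True then show ?thesis using d z1 by simp
next
  case False
  let ?L = "{z1 + t *\<^sub>R b | t. True}"
  have cv: "convex (Z \<inter> ?L)" using oc b unfolding orth_convex_def by blast
  have m1: "z1 \<in> Z \<inter> ?L" using z1 by (auto intro: exI[of _ 0])
  have m2: "z1 + c *\<^sub>R b \<in> Z \<inter> ?L" using z2 by auto
  define \<theta> where "\<theta> = d / c"
  have c0: "c < 0" using d False by linarith
  have t0: "0 \<le> \<theta>" "\<theta> \<le> 1" using c0 d unfolding \<theta>_def
    by (auto simp: divide_simps)
  have "(1 - \<theta>) *\<^sub>R z1 + \<theta> *\<^sub>R (z1 + c *\<^sub>R b) \<in> Z \<inter> ?L"
    using cv m1 m2 t0 unfolding convex_def by auto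
  moreover have "(1 - \<theta>) *\<^sub>R z1 + \<theta> *\<^sub>R (z1 + c *\<^sub>R b) = z1 + d *\<^sub>R b"
    using c0 unfolding \<theta>_def by (simp add: algebra_simps)
  ultimately show ?thesis by simp
qed

lemma seg_union:
  fixes b :: "'a::euclidean_space"
  assumes b: "b \<in> Basis" and s: "0 \<le> s" and t: "0 \<le> t"
  shows "msum Z (cbox 0 (s *\<^sub>R b)) \<union> msum Z (cbox (s *\<^sub>R b) ((s+t) *\<^sub>R b)) = msum Z (cbox 0 ((s+t) *\<^sub>R b))"
proof (intro set_eqI iffI)
  fix x assume "x \<in> msum Z (cbox 0 (s *\<^sub>R b)) \<union> msum Z (cbox (s *\<^sub>R b) ((s+t) *\<^sub>R b))"
  then show "x \<in> msum Z (cbox 0 ((s+t) *\<^sub>R b))"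
    unfolding Un_iff msum_seg0[OF b] msum_seg[OF b] using s t
    by (smt (verit))
next
  fix x assume "x \<in> msum Z (cbox 0 ((s+t) *\<^sub>R b))"
  then obtain z u where zu: "z \<in> Z" "0 \<le> u" "u \<le> s + t" "x = z + u *\<^sub>R b"
    unfolding msum_seg0[OF b] by blast
  show "x \<in> msum Z (cbox 0 (s *\<^sub>R b)) \<union> msum Z (cbox (s *\<^sub>R b) ((s+t) *\<^sub>R b))"
  proof (cases "u \<le> s")
    case True then show ?thesis unfolding Un_iff msum_seg0[OF b] using zu by blast
  next
    case False
    have "x \<in> msum Z (cbox (s *\<^sub>R b) ((s+t) *\<^sub>R b))"
      unfolding msum_seg[OF b] using zu False by (intro bexI[OF _ zu(1)] exI[of _ u]) auto
    then show ?thesis by blast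
  qed
qed

lemma seg_inter:
  fixes b :: "'a::euclidean_space"
  assumes b: "b \<in> Basis" and s: "0 \<le> s" and t: "0 \<le> t" and oc: "orth_convex Z"
  shows "msum Z (cbox 0 (s *\<^sub>R b)) \<inter> msum Z (cbox (s *\<^sub>R b) ((s+t) *\<^sub>R b)) = msum Z (cbox (s *\<^sub>R b) (s *\<^sub>R b))"
proof (intro set_eqI iffI)
  fix x assume "x \<in> msum Z (cbox 0 (s *\<^sub>R b)) \<inter> msum Z (cbox (s *\<^sub>R b) ((s+t) *\<^sub>R b))"
  then obtain z1 u1 z2 u2 where h: "z1 \<in> Z" "0 \<le> u1" "u1 \<le> s" "x = z1 + u1 *\<^sub>R b"
     "z2 \<in> Z" "s \<le> u2" "u2 \<le> s + t" "x = z2 + u2 *\<^sub>R b"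
    unfolding Int_iff msum_seg0[OF b] msum_seg[OF b] by blast
  have "z2 = z1 + (u1 - u2) *\<^sub>R b" using h by (simp add: algebra_simps)
  then have "z1 + (u1 - s) *\<^sub>R b \<in> Z"
    using between_in[OF b oc h(1), of "u1 - u2" "u1 - s"] h by auto
  moreover have "x = (z1 + (u1 - s) *\<^sub>R b) + s *\<^sub>R b" using h by (simp add: algebra_simps)
  ultimately show "x \<in> msum Z (cbox (s *\<^sub>R b) (s *\<^sub>R b))"
    unfolding msum_seg[OF b] by blast
next
  fix x assume "x \<in> msum Z (cbox (s *\<^sub>R b) (s *\<^sub>R b))"
  then obtain z where z: "z \<in> Z" "x = z + s *\<^sub>R b" unfolding msum_seg[OF b] by auto
  show "x \<in> msum Z (cbox 0 (s *\<^sub>R b)) \<inter> msum Z (cbox (s *\<^sub>R b) ((s+t) *\<^sub>R b))"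
    unfolding Int_iff msum_seg0[OF b] msum_seg[OF b] using z s t
    by (intro conjI bexI[OF _ z(1)] exI[of _ s]) auto
qed

lemma box_insert:
  fixes b :: "'a::euclidean_space"
  assumes b: "b \<in> Basis" and bF: "b \<notin> F" and F: "F \<subseteq> Basis" and d: "0 \<le> \<delta>"
  shows "cbox 0 (\<delta> *\<^sub>R (\<Sum>c\<in>insert b F. c)) = msum (cbox 0 (\<delta> *\<^sub>R (\<Sum>c\<in>F. c))) (cbox 0 (\<delta> *\<^sub>R b))"
proof (intro set_eqI iffI)
  have F': "insert b F \<subseteq> Basis" using b F by auto
  fix x assume x: "x \<in> cbox 0 (\<delta> *\<^sub>R (\<Sum>c\<in>insert b F. c))"
  have xc: "\<And>i. i \<in> Basis \<Longrightarrow> 0 \<le> x \<bullet> i \<and> x \<bullet> i \<le> \<delta> * (if i \<in> insert b F then 1 else 0)"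
    using x ones_inner[OF F'] by (auto simp: mem_box)
  define v where "v = x - (x \<bullet> b) *\<^sub>R b"
  have "v \<in> cbox 0 (\<delta> *\<^sub>R (\<Sum>c\<in>F. c))"
    unfolding mem_box
  proof (intro ballI)
    fix i :: 'a assume i: "i \<in> Basis"
    show "0 \<bullet> i \<le> v \<bullet> i \<and> v \<bullet> i \<le> (\<delta> *\<^sub>R (\<Sum>c\<in>F. c)) \<bullet> i"
      using xc[OF i] ones_inner[OF F i] bF i b d unfolding v_def
      by (cases "i = b") (auto simp: inner_Basis inner_diff_left)
  qed
  moreover have "(x \<bullet> b) *\<^sub>R b \<in> cbox 0 (\<delta> *\<^sub>R b)"
    using seg_cbox[OF b, of 0 \<delta>] xc[OF b] by auto
  moreover have "x = v + (x \<bullet> b) *\<^sub>R b" unfolding v_def by simp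
  ultimately show "x \<in> msum (cbox 0 (\<delta> *\<^sub>R (\<Sum>c\<in>F. c))) (cbox 0 (\<delta> *\<^sub>R b))"
    unfolding msum_def by blast
next
  have F': "insert b F \<subseteq> Basis" using b F by auto
  fix x assume "x \<in> msum (cbox 0 (\<delta> *\<^sub>R (\<Sum>c\<in>F. c))) (cbox 0 (\<delta> *\<^sub>R b))"
  then obtain v u where vu: "v \<in> cbox 0 (\<delta> *\<^sub>R (\<Sum>c\<in>F. c))" "0 \<le> u" "u \<le> \<delta>" "x = v + u *\<^sub>R b"
    unfolding msum_def using seg_cbox[OF b, of 0 \<delta>] by auto
  have vc: "\<And>i. i \<in> Basis \<Longrightarrow> 0 \<le> v \<bullet> i \<and> v \<bullet> i \<le> \<delta> * (if i \<in> F then 1 else 0)"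
    using vu(1) ones_inner[OF F] by (auto simp: mem_box)
  show "x \<in> cbox 0 (\<delta> *\<^sub>R (\<Sum>c\<in>insert b F. c))"
    unfolding mem_box
  proof (intro ballI)
    fix i :: 'a assume i: "i \<in> Basis"
    show "0 \<bullet> i \<le> x \<bullet> i \<and> x \<bullet> i \<le> (\<delta> *\<^sub>R (\<Sum>c\<in>insert b F. c)) \<bullet> i"
      using vc[OF i] ones_inner[OF F' i] bF i b d vu
      by (cases "i = b") (auto simp: inner_Basis inner_add_left)
  qed
qed

lemma seg_ne: "b \<in> Basis \<Longrightarrow> \<alpha> \<le> \<beta> \<Longrightarrow> cbox (\<alpha> *\<^sub>R b) (\<beta> *\<^sub>R b) \<noteq> {}"
  using seg_cbox[of b \<alpha> \<beta>] by auto

lemma l1_sub_cube: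
  fixes \<delta> :: real
  shows "(l1_cball \<delta> :: 'a::euclidean_space set) \<subseteq> cbox (- (\<delta> *\<^sub>R (\<Sum>c\<in>Basis. c))) (\<delta> *\<^sub>R (\<Sum>c\<in>Basis. c))"
proof
  fix x :: 'a assume "x \<in> l1_cball \<delta>"
  then have x: "(\<Sum>b\<in>Basis. \<bar>x \<bullet> b\<bar>) \<le> \<delta>" unfolding l1_cball_def by simp
  show "x \<in> cbox (- (\<delta> *\<^sub>R (\<Sum>c\<in>Basis. c))) (\<delta> *\<^sub>R (\<Sum>c\<in>Basis. c))"
    unfolding mem_box
  proof
    fix i :: 'a assume i: "i \<in> Basis"
    have "\<bar>x \<bullet> i\<bar> \<le> (\<Sum>b\<in>Basis. \<bar>x \<bullet> b\<bar>)"
      using member_le_sum[of i Basis "\<lambda>b. \<bar>x \<bullet> b\<bar>"] i by simp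
    then show "- (\<delta> *\<^sub>R (\<Sum>c\<in>Basis. c)) \<bullet> i \<le> x \<bullet> i \<and> x \<bullet> i \<le> (\<delta> *\<^sub>R (\<Sum>c\<in>Basis. c)) \<bullet> i"
      using ones_inner[OF order_refl i] x i by (auto simp: inner_minus_left)
  qed
qed

lemma l1_exists:
  fixes X Y :: "'a::euclidean_space set"
  assumes X: "compact X" and Y: "compact Y" "Y \<noteq> {}"
  shows "\<exists>\<delta>>0. X \<subseteq> msum Y (l1_cball \<delta>)"
proof -
  have "bounded (X \<union> Y)" using X Y compact_imp_bounded by auto
  then obtain B where B: "\<And>x. x \<in> X \<union> Y \<Longrightarrow> norm x \<le> B" unfolding bounded_iff by blast
  obtain y0 where y0: "y0 \<in> Y" using Y by blast
  have "norm y0 \<le> B" using B[of y0] y0 by auto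
  then have B0: "0 \<le> B" using norm_ge_zero[of y0] by linarith
  define \<delta> where "\<delta> = real DIM('a) * (2 * B) + 1"
  have dpos: "\<delta> > 0" unfolding \<delta>_def using B0 by (simp add: add_nonneg_pos)
  have "X \<subseteq> msum Y (l1_cball \<delta>)"
  proof
    fix x assume x: "x \<in> X"
    have "(\<Sum>b\<in>Basis. \<bar>(x - y0) \<bullet> b\<bar>) \<le> (\<Sum>b\<in>(Basis::'a set). norm (x - y0))"
      by (intro sum_mono Basis_le_norm)
    also have "\<dots> = real DIM('a) * norm (x - y0)" by simp
    also have "\<dots> \<le> real DIM('a) * (2 * B)"
    proof (intro mult_left_mono)
      have "norm (x - y0) \<le> norm x + norm y0" by (rule norm_triangle_ineq4)
      also have "\<dots> \<le> 2 * B" using B[of x] B[of y0] x y0 by auto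
      finally show "norm (x - y0) \<le> 2 * B" .
    qed simp
    finally have "x - y0 \<in> l1_cball \<delta>" unfolding l1_cball_def \<delta>_def by simp
    moreover have "x = y0 + (x - y0)" by simp
    ultimately show "x \<in> msum Y (l1_cball \<delta>)" unfolding msum_def using y0 by blast
  qed
  then show ?thesis using dpos by blast
qed

lemma l1_mono: "\<delta> \<le> \<delta>' \<Longrightarrow> l1_cball \<delta> \<subseteq> l1_cball \<delta>'"
  unfolding l1_cball_def by auto

lemma hd_small:
  fixes X Y :: "'a::euclidean_space set"
  assumes X: "compact X" "X \<noteq> {}" and Y: "compact Y" "Y \<noteq> {}" and h: "hausdorff_dist X Y < d"
  shows "\<exists>\<delta>>0. \<delta> < d \<and> X \<subseteq> msum Y (l1_cball \<delta>) \<and> Y \<subseteq> msum X (l1_cball \<delta>)"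
proof -
  let ?S = "{\<delta>. \<delta> > 0 \<and> X \<subseteq> msum Y (l1_cball \<delta>) \<and> Y \<subseteq> msum X (l1_cball \<delta>)}"
  obtain d1 where d1: "d1 > 0" "X \<subseteq> msum Y (l1_cball d1)" using l1_exists[OF X(1) Y] by blast
  obtain d2 where d2: "d2 > 0" "Y \<subseteq> msum X (l1_cball d2)" using l1_exists[OF Y(1) X] by blast
  have "X \<subseteq> msum Y (l1_cball (max d1 d2))"
    using d1(2) msum_mono[OF l1_mono[of d1 "max d1 d2"]] by auto
  moreover have "Y \<subseteq> msum X (l1_cball (max d1 d2))"
    using d2(2) msum_mono[OF l1_mono[of d2 "max d1 d2"]] by auto
  ultimately have "max d1 d2 \<in> ?S" using d1(1) by auto
  then have ne: "?S \<noteq> {}" by blast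
  have bdd: "bdd_below ?S" by (rule bdd_belowI[of _ 0]) auto
  show ?thesis using h ne bdd unfolding hausdorff_dist_def cInf_less_iff[OF ne bdd] by blast
qed

context
  fixes K :: "'a::euclidean_space set set" and \<phi> :: "'a set \<Rightarrow> real"
  assumes K_orth: "\<forall>X\<in>K. orth_convex X"
    and K_sing: "\<forall>x. {x} \<in> K"
    and K_sum: "\<forall>X\<in>K. \<forall>a b. cbox a b \<noteq> {} \<longrightarrow> msum X (cbox a b) \<in> K"
    and val: "valuation_on K \<phi>"
    and inc: "increasing_on K \<phi>"
    and ti: "translation_invariant_on K \<phi>"
begin

lemma g_add:
  assumes Z: "Z \<in> K" and b: "b \<in> Basis" and s: "0 \<le> s" and t: "0 \<le> t"
  shows "\<phi> (msum Z (cbox 0 ((s+t) *\<^sub>R b))) = \<phi> (msum Z (cbox 0 (s *\<^sub>R b))) + \<phi> (msum Z (cbox 0 (t *\<^sub>R b))) - \<phi> Z"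
proof -
  let ?A = "msum Z (cbox 0 (s *\<^sub>R b))" and ?B = "msum Z (cbox (s *\<^sub>R b) ((s+t) *\<^sub>R b))"
  have ne0: "\<And>r. 0 \<le> r \<Longrightarrow> cbox 0 (r *\<^sub>R b) \<noteq> {}" using seg_ne[OF b, of 0] by simp
  have A: "?A \<in> K" using K_sum Z ne0[OF s] by blast
  have B: "?B \<in> K" using K_sum Z seg_ne[OF b, of s "s+t"] t by auto
  have U: "?A \<union> ?B \<in> K" unfolding seg_union[OF b s t] using K_sum Z ne0 s t by auto
  have I: "?A \<inter> ?B \<in> K" unfolding seg_inter[OF b s t K_orth[rule_format, OF Z]]
    using K_sum[rule_format, OF Z seg_ne[OF b order_refl, of s]] by simp
  have v: "\<phi> (?A \<union> ?B) = \<phi> ?A + \<phi> ?B - \<phi> (?A \<inter> ?B)"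
    using val A B U I unfolding valuation_on_def by blast
  have tK: "msum Z (cbox 0 (t *\<^sub>R b)) \<in> K" using K_sum Z ne0[OF t] by blast
  have "?B = (\<lambda>x. x + s *\<^sub>R b) ` msum Z (cbox 0 (t *\<^sub>R b))"
    using msum_cbox_translate[of Z "s *\<^sub>R b" 0 "t *\<^sub>R b"] by (simp add: algebra_simps)
  then have PB: "\<phi> ?B = \<phi> (msum Z (cbox 0 (t *\<^sub>R b)))" using ti tK
    unfolding translation_invariant_on_def by simp
  have "?A \<inter> ?B = (\<lambda>x. x + s *\<^sub>R b) ` Z"
    unfolding seg_inter[OF b s t K_orth[rule_format, OF Z]] by (simp add: msum_sing)
  then have PI: "\<phi> (?A \<inter> ?B) = \<phi> Z" using ti Z unfolding translation_invariant_on_def by simp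
  show ?thesis using v PB PI unfolding seg_union[OF b s t] by simp
qed

lemma msum_zero: "msum Z {0} = Z"
  unfolding msum_def by auto

lemma g_mult:
  assumes Z: "Z \<in> K" and b: "b \<in> Basis" and s: "0 \<le> s"
  shows "\<phi> (msum Z (cbox 0 ((real k * s) *\<^sub>R b))) - \<phi> Z = real k * (\<phi> (msum Z (cbox 0 (s *\<^sub>R b))) - \<phi> Z)"
proof (induction k)
  case 0 then show ?case by (simp add: msum_zero)
next
  case (Suc k)
  have "(real (Suc k) * s) = real k * s + s" by (simp add: algebra_simps)
  then have "\<phi> (msum Z (cbox 0 ((real (Suc k) * s) *\<^sub>R b))) = \<phi> (msum Z (cbox 0 ((real k * s) *\<^sub>R b))) + \<phi> (msum Z (cbox 0 (s *\<^sub>R b))) - \<phi> Z"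
    using g_add[OF Z b _ s, of "real k * s"] s by simp
  then show ?case using Suc by (simp add: algebra_simps)
qed

lemma g_small:
  assumes Z: "Z \<in> K" and b: "b \<in> Basis" and N: "0 < N" and t: "0 \<le> t" "t \<le> 1 / real N"
  shows "\<phi> (msum Z (cbox 0 (t *\<^sub>R b))) - \<phi> Z \<le> (\<phi> (msum Z (cbox 0 b)) - \<phi> Z) / real N"
proof -
  have ne0: "\<And>r. 0 \<le> r \<Longrightarrow> cbox 0 (r *\<^sub>R b) \<noteq> {}" using seg_ne[OF b, of 0] by simp
  have sub: "cbox 0 (t *\<^sub>R b) \<subseteq> cbox 0 ((1 / real N) *\<^sub>R b)"
    using seg_cbox[OF b, of 0 t] seg_cbox[OF b, of 0 "1 / real N"] t by auto
  have "\<phi> (msum Z (cbox 0 (t *\<^sub>R b))) \<le> \<phi> (msum Z (cbox 0 ((1 / real N) *\<^sub>R b)))"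
    using inc msum_mono[OF sub] K_sum Z ne0 t unfolding increasing_on_def
    by (metis divide_nonneg_nonneg of_nat_0_le_iff zero_le_one order_trans)
  moreover have "\<phi> (msum Z (cbox 0 ((real N * (1 / real N)) *\<^sub>R b))) - \<phi> Z = real N * (\<phi> (msum Z (cbox 0 ((1 / real N) *\<^sub>R b))) - \<phi> Z)"
    using g_mult[OF Z b, of "1 / real N" N] by simp
  ultimately show ?thesis using N by (simp add: field_simps)
qed

lemma box_ne0:
  fixes F :: "'a set"
  assumes "F \<subseteq> Basis" "0 \<le> \<delta>"
  shows "cbox 0 (\<delta> *\<^sub>R (\<Sum>c\<in>F. c)) \<noteq> {}"
  using assms ones_inner[OF assms(1)] by (auto simp: box_ne_empty)

lemma phi_lower:
  assumes Z: "Z \<in> K" and y: "y \<in> Z"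
  shows "\<phi> {0} \<le> \<phi> Z"
proof -
  have "\<phi> {y} = \<phi> {0}" using ti K_sing unfolding translation_invariant_on_def
    by (metis add_0 image_empty image_insert)
  moreover have "\<phi> {y} \<le> \<phi> Z" using inc K_sing Z y unfolding increasing_on_def by auto
  ultimately show ?thesis by simp
qed

lemma box_bound:
  assumes Y: "Y \<in> K" "Y \<noteq> {}" and N: "0 < N" and d: "0 \<le> \<delta>" "\<delta> \<le> 1 / real N"
    and F: "F \<subseteq> Basis"
  shows "\<phi> (msum Y (cbox 0 (\<delta> *\<^sub>R (\<Sum>c\<in>F. c)))) - \<phi> Y
     \<le> real (card F) * (\<phi> (msum Y (cbox 0 (2 *\<^sub>R (\<Sum>c\<in>Basis. c)))) - \<phi> {0}) / real N"
proof -
  define M where "M = \<phi> (msum Y (cbox 0 (2 *\<^sub>R (\<Sum>c\<in>Basis. c))))"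
  define m where "m = \<phi> {0}"
  have "1 / real N \<le> 1" using N by (simp add: divide_le_eq)
  then have d1: "\<delta> \<le> 1" using d by linarith
  have MK: "msum Y (cbox 0 (2 *\<^sub>R (\<Sum>c\<in>Basis. c))) \<in> K"
    using K_sum Y box_ne0[of Basis 2] by auto
  have fin: "finite F" using finite_subset[OF F finite_Basis] .
  show ?thesis using fin F unfolding M_def[symmetric] m_def[symmetric]
  proof (induction F rule: finite_induct)
    case empty
    then show ?case by (simp add: msum_zero)
  next
    case (insert b F)
    have b: "b \<in> Basis" and FB: "F \<subseteq> Basis" using insert(4) by auto
    define ZF where "ZF = msum Y (cbox 0 (\<delta> *\<^sub>R (\<Sum>c\<in>F. c)))"
    have ZF: "ZF \<in> K" unfolding ZF_def using K_sum Y box_ne0[OF FB d(1)] by auto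
    obtain y where y: "y \<in> Y" using Y by blast
    have z0: "0 \<in> cbox 0 (\<delta> *\<^sub>R (\<Sum>c\<in>F. c))"
      using ones_inner[OF FB] d(1) by (auto simp: mem_box)
    have yZ: "y \<in> ZF" unfolding ZF_def msum_def using y z0
      by (metis (mono_tags, lifting) add.right_neutral mem_Collect_eq)
    have eq: "msum Y (cbox 0 (\<delta> *\<^sub>R (\<Sum>c\<in>insert b F. c))) = msum ZF (cbox 0 (\<delta> *\<^sub>R b))"
      unfolding ZF_def box_insert[OF b insert(2) FB d(1)] msum_assoc ..
    have gs: "\<phi> (msum ZF (cbox 0 (\<delta> *\<^sub>R b))) - \<phi> ZF \<le> (\<phi> (msum ZF (cbox 0 b)) - \<phi> ZF) / real N"
      using g_small[OF ZF b N d] .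
    have ne1: "cbox 0 b \<noteq> {}" using seg_ne[OF b, of 0 1] by simp
    have sub: "msum (cbox 0 (\<delta> *\<^sub>R (\<Sum>c\<in>F. c))) (cbox 0 b) \<subseteq> cbox 0 (2 *\<^sub>R (\<Sum>c\<in>Basis. c))"
    proof
      fix x assume "x \<in> msum (cbox 0 (\<delta> *\<^sub>R (\<Sum>c\<in>F. c))) (cbox 0 b)"
      then obtain v w where vw: "v \<in> cbox 0 (\<delta> *\<^sub>R (\<Sum>c\<in>F. c))" "w \<in> cbox 0 b" "x = v + w"
        unfolding msum_def by blast
      show "x \<in> cbox 0 (2 *\<^sub>R (\<Sum>c\<in>Basis. c))"
        unfolding mem_box
      proof
        fix i :: 'a assume i: "i \<in> Basis"
        have "0 \<le> v \<bullet> i" "v \<bullet> i \<le> 1" using vw(1) i ones_inner[OF FB i] d1 d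
          by (auto simp: mem_box split: if_splits)
        moreover have "0 \<le> w \<bullet> i" "w \<bullet> i \<le> 1" using vw(2) i b
          by (auto simp: mem_box inner_Basis split: if_splits)
        ultimately show "0 \<bullet> i \<le> x \<bullet> i \<and> x \<bullet> i \<le> (2 *\<^sub>R (\<Sum>c\<in>Basis. c)) \<bullet> i"
          using vw(3) ones_inner[OF order_refl i] i by (simp add: inner_add_left)
      qed
    qed
    have up: "\<phi> (msum ZF (cbox 0 b)) \<le> M"
    proof -
      have "msum ZF (cbox 0 b) \<subseteq> msum Y (cbox 0 (2 *\<^sub>R (\<Sum>c\<in>Basis. c)))"
        unfolding ZF_def msum_assoc by (rule msum_mono[OF sub])
      moreover have "msum ZF (cbox 0 b) \<in> K" using K_sum ZF ne1 by blast
      ultimately show ?thesis using inc MK unfolding M_def increasing_on_def by blast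
    qed
    have lo: "m \<le> \<phi> ZF" unfolding m_def using phi_lower[OF ZF yZ] .
    have "(\<phi> (msum ZF (cbox 0 b)) - \<phi> ZF) / real N \<le> (M - m) / real N"
      using up lo N by (simp add: divide_right_mono)
    then have step: "\<phi> (msum ZF (cbox 0 (\<delta> *\<^sub>R b))) - \<phi> ZF \<le> (M - m) / real N" using gs by linarith
    have IH: "\<phi> ZF - \<phi> Y \<le> real (card F) * (M - m) / real N" using insert.IH FB unfolding ZF_def by blast
    have "real (card (insert b F)) * (M - m) / real N = real (card F) * (M - m) / real N + (M - m) / real N"
      using insert(1,2) by (simp add: add_divide_distrib[symmetric] algebra_simps)
    then show ?case unfolding eq using step IH by linarith
  qed
qed

lemma key:
  assumes A: "A \<in> K" and B: "B \<in> K" "B \<noteq> {}" and X: "X \<in> K" and d: "0 < \<delta>" "2 * \<delta> \<le> 1 / real N"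
    and N: "0 < N"
    and AB: "A \<subseteq> msum B (l1_cball \<delta>)"
    and BX: "B \<subseteq> msum X (cbox (- (\<Sum>c\<in>Basis. c)) (\<Sum>c\<in>Basis. c))"
  shows "\<phi> A - \<phi> B \<le> real DIM('a) * (\<phi> (msum X (cbox (- (3 *\<^sub>R (\<Sum>c\<in>Basis. c))) (3 *\<^sub>R (\<Sum>c\<in>Basis. c)))) - \<phi> {0}) / real N"
proof -
  define Ov :: 'a where "Ov = (\<Sum>c\<in>Basis. c)"
  have Oi: "\<And>i. i \<in> Basis \<Longrightarrow> Ov \<bullet> i = 1" unfolding Ov_def using ones_inner[OF order_refl] by simp
  define W where "W = msum X (cbox (- (3 *\<^sub>R Ov)) (3 *\<^sub>R Ov))"
  have WK: "W \<in> K" unfolding W_def using K_sum X Oi by (auto simp: box_ne_empty inner_minus_left)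
  define C2 where "C2 = msum B (cbox 0 ((2 * \<delta>) *\<^sub>R Ov))"
  have C2K: "C2 \<in> K" unfolding C2_def Ov_def using K_sum B box_ne0[OF order_refl, of "2*\<delta>"] d by auto
  have eqc: "- (\<delta> *\<^sub>R Ov) + (2 * \<delta>) *\<^sub>R Ov = \<delta> *\<^sub>R Ov" by (simp add: algebra_simps scaleR_left_distrib[symmetric])
  have tr: "msum B (cbox (- (\<delta> *\<^sub>R Ov)) (\<delta> *\<^sub>R Ov)) = (\<lambda>x. x + - (\<delta> *\<^sub>R Ov)) ` C2"
    unfolding C2_def using msum_cbox_translate[of B "- (\<delta> *\<^sub>R Ov)" 0 "(2 * \<delta>) *\<^sub>R Ov"] eqc by simp
  have CK: "msum B (cbox (- (\<delta> *\<^sub>R Ov)) (\<delta> *\<^sub>R Ov)) \<in> K"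
    using K_sum B Oi d by (auto simp: box_ne_empty inner_minus_left)
  have "A \<subseteq> msum B (cbox (- (\<delta> *\<^sub>R Ov)) (\<delta> *\<^sub>R Ov))"
    using AB msum_mono[OF l1_sub_cube[of \<delta>]] unfolding Ov_def by blast
  then have "\<phi> A \<le> \<phi> (msum B (cbox (- (\<delta> *\<^sub>R Ov)) (\<delta> *\<^sub>R Ov)))"
    using inc A CK unfolding increasing_on_def by blast
  also have "\<dots> = \<phi> C2" unfolding tr using ti C2K unfolding translation_invariant_on_def by blast
  finally have a1: "\<phi> A \<le> \<phi> C2" .
  have a2: "\<phi> C2 - \<phi> B \<le> real (card (Basis::'a set)) * (\<phi> (msum B (cbox 0 (2 *\<^sub>R Ov))) - \<phi> {0}) / real N"
    unfolding C2_def Ov_def using box_bound[OF B N _ d(2) order_refl] d by simp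
  have sub: "msum (cbox (- Ov) Ov) (cbox 0 (2 *\<^sub>R Ov)) \<subseteq> cbox (- (3 *\<^sub>R Ov)) (3 *\<^sub>R Ov)"
  proof
    fix x assume "x \<in> msum (cbox (- Ov) Ov) (cbox 0 (2 *\<^sub>R Ov))"
    then obtain v w where vw: "v \<in> cbox (- Ov) Ov" "w \<in> cbox 0 (2 *\<^sub>R Ov)" "x = v + w"
      unfolding msum_def by blast
    show "x \<in> cbox (- (3 *\<^sub>R Ov)) (3 *\<^sub>R Ov)" unfolding mem_box
    proof
      fix i :: 'a assume i: "i \<in> Basis"
      show "- (3 *\<^sub>R Ov) \<bullet> i \<le> x \<bullet> i \<and> x \<bullet> i \<le> (3 *\<^sub>R Ov) \<bullet> i"
        using vw i Oi[OF i] by (auto simp: mem_box inner_minus_left inner_add_left dest!: bspec[of _ _ i])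
    qed
  qed
  have "msum B (cbox 0 (2 *\<^sub>R Ov)) \<subseteq> W"
  proof -
    have "msum B (cbox 0 (2 *\<^sub>R Ov)) \<subseteq> msum (msum X (cbox (- Ov) Ov)) (cbox 0 (2 *\<^sub>R Ov))"
      using msum_mono1 BX unfolding Ov_def by blast
    also have "\<dots> \<subseteq> W" unfolding W_def msum_assoc by (rule msum_mono[OF sub])
    finally show ?thesis .
  qed
  moreover have "msum B (cbox 0 (2 *\<^sub>R Ov)) \<in> K" unfolding Ov_def using K_sum B box_ne0[OF order_refl, of 2] by auto
  ultimately have a3: "\<phi> (msum B (cbox 0 (2 *\<^sub>R Ov))) \<le> \<phi> W" using inc WK unfolding increasing_on_def by blast
  have "real (card (Basis::'a set)) * (\<phi> (msum B (cbox 0 (2 *\<^sub>R Ov))) - \<phi> {0}) / real N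
      \<le> real DIM('a) * (\<phi> W - \<phi> {0}) / real N"
    using a3 N by (intro divide_right_mono mult_left_mono) auto
  then show ?thesis using a1 a2 unfolding W_def Ov_def by linarith
qed

lemma cont:
  assumes K_compact: "\<forall>X\<in>K. compact X"
  shows "hausdorff_continuous_on K \<phi>"
  unfolding hausdorff_continuous_on_def
proof (intro ballI impI allI)
  fix X assume X: "X \<in> K" "X \<noteq> {}"
  fix e :: real assume e: "e > 0"
  define Ov :: 'a where "Ov = (\<Sum>c\<in>Basis. c)"
  define c where "c = real DIM('a) * (\<phi> (msum X (cbox (- (3 *\<^sub>R Ov)) (3 *\<^sub>R Ov))) - \<phi> {0})"
  define N :: nat where "N = nat \<lceil>c / e\<rceil> + 1"
  have N: "0 < N" unfolding N_def by simp
  have "c / e < real N" unfolding N_def using real_nat_ceiling_ge[of "c/e"] by simp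
  then have "c < real N * e" using e by (simp add: divide_less_eq)
  then have cN: "c / real N < e" using N by (simp add: divide_less_eq mult.commute)
  have Oi: "\<And>i. i \<in> Basis \<Longrightarrow> Ov \<bullet> i = 1" unfolding Ov_def using ones_inner[OF order_refl] by simp
  show "\<exists>d>0. \<forall>Y\<in>K. Y \<noteq> {} \<longrightarrow> hausdorff_dist X Y < d \<longrightarrow> \<bar>\<phi> Y - \<phi> X\<bar> < e"
  proof (intro exI[of _ "1 / (2 * real N)"] conjI ballI impI)
    show "0 < 1 / (2 * real N)" using N by simp
    fix Y assume Y: "Y \<in> K" "Y \<noteq> {}" and h: "hausdorff_dist X Y < 1 / (2 * real N)"
    obtain \<delta> where dl: "\<delta> > 0" "\<delta> < 1 / (2 * real N)" "X \<subseteq> msum Y (l1_cball \<delta>)" "Y \<subseteq> msum X (l1_cball \<delta>)"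
      using hd_small[OF _ X(2) _ Y(2) h] K_compact X Y by blast
    have d2: "2 * \<delta> \<le> 1 / real N" using dl(2) N by (simp add: field_simps)
    have "1 / (2 * real N) \<le> 1" using N by (simp add: divide_le_eq)
    then have d1: "\<delta> \<le> 1" using dl(2) by linarith
    have "Y \<subseteq> msum X (cbox (- Ov) Ov)"
    proof -
      have "Y \<subseteq> msum X (l1_cball 1)" using dl(4) msum_mono[OF l1_mono[OF d1]] by blast
      also have "\<dots> \<subseteq> msum X (cbox (- Ov) Ov)" using msum_mono[OF l1_sub_cube[of 1]] unfolding Ov_def by simp
      finally show ?thesis .
    qed
    then have k1: "\<phi> X - \<phi> Y \<le> c / real N"
      using key[OF X(1) Y X(1) dl(1) d2 N dl(3)] unfolding c_def Ov_def by simp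
    have z: "0 \<in> cbox (- Ov) Ov" using Oi by (auto simp: mem_box inner_minus_left)
    have "X \<subseteq> msum X (cbox (- Ov) Ov)" unfolding msum_def using z
      by (force intro: exI[of _ 0])
    then have k2: "\<phi> Y - \<phi> X \<le> c / real N"
      using key[OF Y(1) X X(1) dl(1) d2 N dl(4)] unfolding c_def Ov_def by simp
    show "\<bar>\<phi> Y - \<phi> X\<bar> < e" using k1 k2 cN by linarith
  qed
qed

end

theorem theorem4p2:
  fixes K :: "'a::euclidean_space set set" and \<phi> :: "'a set \<Rightarrow> real"
  assumes K_compact: "\<forall>X\<in>K. compact X"
    and K_orth: "\<forall>X\<in>K. orth_convex X"
    and K_sing: "\<forall>x. {x} \<in> K"
    and K_sum: "\<forall>X\<in>K. \<forall>a b. cbox a b \<noteq> {} \<longrightarrow> msum X (cbox a b) \<in> K"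
    and val: "valuation_on K \<phi>"
    and mono: "monotone_val_on K \<phi>"
    and ti: "translation_invariant_on K \<phi>"
  shows "hausdorff_continuous_on K \<phi>"
proof (cases "increasing_on K \<phi>")
  case True
  show ?thesis using cont[OF K_orth K_sing K_sum val True ti K_compact] .
next
  case False
  then have inc: "increasing_on K (\<lambda>X. - \<phi> X)" using mono unfolding monotone_val_on_def by blast
  have val': "valuation_on K (\<lambda>X. - \<phi> X)" using val unfolding valuation_on_def by auto
  have ti': "translation_invariant_on K (\<lambda>X. - \<phi> X)" using ti unfolding translation_invariant_on_def by auto
  have "hausdorff_continuous_on K (\<lambda>X. - \<phi> X)" using cont[OF K_orth K_sing K_sum val' inc ti' K_compact] .
  then show ?thesis unfolding hausdorff_continuous_on_def by (simp add: abs_minus_commute)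
qed

end
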